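(* Let $n,k\in\mathbb N$ and let $G=(V,E)$ be a connected $n$-quasitransitive graph with all degrees at most $k$. Then there exist a connected vertex-transitive graph $G'=(V',E')$ with all degrees at most $(k+1)^{2n}$ and $\operatorname{diam}(G')\le\operatorname{diam}(G)$, and an injective $(2n,n)$-rough isometry $G'\to G$ (i.e. from $V'$ to $V$). Moreover, if $G$ is finite then one may additionally require $|V|/n\le|V'|\le|V|$.
   Context: $G$ is $n$-quasitransitive if $\mathrm{Aut}(G)$ acting on $V$ has at most $n$ orbits. With $d$ the graph distance on each graph, a map $\phi:V'\to V$ is an $(\alpha,\beta)$-rough isometry if $\alpha^{-1}d(x,y)-\beta\le d(\phi(x),\phi(y))\le\alpha d(x,y)+\beta$ for all $x,y\in V'$, and for every $y\in V$ there is $x\in V'$ with $d(\phi(x),y)\le\beta$. *)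

theory Defs
  imports Main "HOL-Library.Extended_Nat"
begin

definition graph :: "'a set \<Rightarrow> ('a \<Rightarrow> 'a \<Rightarrow> bool) \<Rightarrow> bool" where
  "graph V E \<longleftrightarrow> (\<forall>x y. E x y \<longrightarrow> x \<in> V \<and> y \<in> V \<and> E y x \<and> x \<noteq> y)"

definition edge_rel :: "'a set \<Rightarrow> ('a \<Rightarrow> 'a \<Rightarrow> bool) \<Rightarrow> ('a \<times> 'a) set" where
  "edge_rel V E = {(x, y). x \<in> V \<and> y \<in> V \<and> E x y}"

text \<open>Graph distance: length of a shortest path (meaningful for connected graphs).\<close>
definition gdist :: "'a set \<Rightarrow> ('a \<Rightarrow> 'a \<Rightarrow> bool) \<Rightarrow> 'a \<Rightarrow> 'a \<Rightarrow> nat" where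
  "gdist V E x y = (LEAST m. (x, y) \<in> (edge_rel V E) ^^ m)"

definition connected_graph :: "'a set \<Rightarrow> ('a \<Rightarrow> 'a \<Rightarrow> bool) \<Rightarrow> bool" where
  "connected_graph V E \<longleftrightarrow> V \<noteq> {} \<and> (\<forall>x\<in>V. \<forall>y\<in>V. (x, y) \<in> (edge_rel V E)\<^sup>*)"

definition gdiam :: "'a set \<Rightarrow> ('a \<Rightarrow> 'a \<Rightarrow> bool) \<Rightarrow> enat" where
  "gdiam V E = (SUP x\<in>V. SUP y\<in>V. enat (gdist V E x y))"

definition max_degree_le :: "'a set \<Rightarrow> ('a \<Rightarrow> 'a \<Rightarrow> bool) \<Rightarrow> nat \<Rightarrow> bool" where
  "max_degree_le V E k \<longleftrightarrow> (\<forall>v\<in>V. finite {w\<in>V. E v w} \<and> card {w\<in>V. E v w} \<le> k)"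

definition graph_aut :: "'a set \<Rightarrow> ('a \<Rightarrow> 'a \<Rightarrow> bool) \<Rightarrow> ('a \<Rightarrow> 'a) \<Rightarrow> bool" where
  "graph_aut V E \<sigma> \<longleftrightarrow> bij_betw \<sigma> V V \<and> (\<forall>x\<in>V. \<forall>y\<in>V. E x y \<longleftrightarrow> E (\<sigma> x) (\<sigma> y))"

definition aut_orbit :: "'a set \<Rightarrow> ('a \<Rightarrow> 'a \<Rightarrow> bool) \<Rightarrow> 'a \<Rightarrow> 'a set" where
  "aut_orbit V E v = {\<sigma> v | \<sigma>. graph_aut V E \<sigma>}"

definition quasitransitive :: "nat \<Rightarrow> 'a set \<Rightarrow> ('a \<Rightarrow> 'a \<Rightarrow> bool) \<Rightarrow> bool" where
  "quasitransitive n V E \<longleftrightarrow> finite (aut_orbit V E ` V) \<and> card (aut_orbit V E ` V) \<le> n"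

definition vertex_transitive :: "'a set \<Rightarrow> ('a \<Rightarrow> 'a \<Rightarrow> bool) \<Rightarrow> bool" where
  "vertex_transitive V E \<longleftrightarrow> (\<forall>x\<in>V. \<forall>y\<in>V. \<exists>\<sigma>. graph_aut V E \<sigma> \<and> \<sigma> x = y)"

definition rough_isometry ::
  "'b set \<Rightarrow> ('b \<Rightarrow> 'b \<Rightarrow> bool) \<Rightarrow> 'a set \<Rightarrow> ('a \<Rightarrow> 'a \<Rightarrow> bool) \<Rightarrow> ('b \<Rightarrow> 'a) \<Rightarrow> real \<Rightarrow> real \<Rightarrow> bool" where
  "rough_isometry V' E' V E \<phi> \<alpha> \<beta> \<longleftrightarrow>
     \<phi> ` V' \<subseteq> V \<and>
     (\<forall>x\<in>V'. \<forall>y\<in>V'.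
        inverse \<alpha> * real (gdist V' E' x y) - \<beta> \<le> real (gdist V E (\<phi> x) (\<phi> y)) \<and>
        real (gdist V E (\<phi> x) (\<phi> y)) \<le> \<alpha> * real (gdist V' E' x y) + \<beta>) \<and>
     (\<forall>y\<in>V. \<exists>x\<in>V'. real (gdist V E (\<phi> x) y) \<le> \<beta>)"

end

theory Submission
  imports Defs
begin


lemma edge_rel_iff: "(x,y) \<in> edge_rel V E \<longleftrightarrow> x \<in> V \<and> y \<in> V \<and> E x y"
  by (simp add: edge_rel_def)

lemma relpow_in_V:
  assumes "(x,y) \<in> (edge_rel V E)^^m" "x \<in> V" shows "y \<in> V"
proof (cases m)
  case 0 then show ?thesis using assms by auto
next
  case (Suc m')
  then obtain z where "(z,y) \<in> edge_rel V E" using assms(1) by (auto elim: relpow_Suc_E)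
  then show ?thesis by (simp add: edge_rel_iff)
qed

lemma relpow_sym:
  assumes "graph V E" "(x,y) \<in> (edge_rel V E)^^m" shows "(y,x) \<in> (edge_rel V E)^^m"
  using assms(2)
proof (induction m arbitrary: y)
  case 0 then show ?case by auto
next
  case (Suc m)
  then obtain z where z1: "(x,z) \<in> (edge_rel V E)^^m" and z2: "(z,y) \<in> edge_rel V E" by (auto elim: relpow_Suc_E)
  have "(y,z) \<in> edge_rel V E" using z2 assms(1) by (auto simp: edge_rel_iff graph_def)
  then show ?case using Suc.IH[OF z1] by (rule relpow_Suc_I2)
qed

lemma conn_reach:
  assumes "connected_graph V E" "x \<in> V" "y \<in> V" shows "\<exists>m. (x,y) \<in> (edge_rel V E)^^m"
  using assms by (auto simp: connected_graph_def rtrancl_power)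

lemma gdist_reach:
  assumes "connected_graph V E" "x \<in> V" "y \<in> V" shows "(x,y) \<in> (edge_rel V E)^^(gdist V E x y)"
  unfolding gdist_def using conn_reach[OF assms] by (rule LeastI_ex)

lemma gdist_le:
  assumes "(x,y) \<in> (edge_rel V E)^^m" shows "gdist V E x y \<le> m"
  unfolding gdist_def using assms by (rule Least_le)

lemma gdist_self: "gdist V E x x = 0"
  using gdist_le[where x=x and y=x and m=0 and V=V and E=E] by simp

lemma gdist_sym:
  assumes "graph V E" "connected_graph V E" "x \<in> V" "y \<in> V" shows "gdist V E x y = gdist V E y x"
proof (rule antisym)
  show "gdist V E x y \<le> gdist V E y x"
    by (rule gdist_le, rule relpow_sym[OF assms(1)], rule gdist_reach) (use assms in auto)
  show "gdist V E y x \<le> gdist V E x y"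
    by (rule gdist_le, rule relpow_sym[OF assms(1)], rule gdist_reach) (use assms in auto)
qed

lemma gdist_tri:
  assumes "connected_graph V E" "x \<in> V" "y \<in> V" "z \<in> V"
  shows "gdist V E x z \<le> gdist V E x y + gdist V E y z"
proof -
  have "(x,z) \<in> (edge_rel V E)^^(gdist V E x y + gdist V E y z)"
    unfolding relpow_add by (rule relcompI; rule gdist_reach) (use assms in auto)
  then show ?thesis by (rule gdist_le)
qed

lemma gdist_edge:
  assumes "x \<in> V" "y \<in> V" "E x y" shows "gdist V E x y \<le> 1"
  using gdist_le[where x=x and y=y and m=1 and V=V and E=E] assms by (simp add: edge_rel_iff)

lemma aut_relpow:
  assumes "graph_aut V E \<sigma>" "x \<in> V" "y \<in> V"
  shows "((\<sigma> x, \<sigma> y) \<in> (edge_rel V E)^^m) = ((x,y) \<in> (edge_rel V E)^^m)"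
  using assms(3)
proof (induction m arbitrary: y)
  case 0
  have "inj_on \<sigma> V" using assms(1) by (auto simp: graph_aut_def bij_betw_def)
  then show ?case using 0 assms(2) by (simp add: inj_on_eq_iff)
next
  case (Suc m)
  have bij: "bij_betw \<sigma> V V" and ed: "\<forall>x\<in>V. \<forall>y\<in>V. E x y \<longleftrightarrow> E (\<sigma> x) (\<sigma> y)"
    using assms(1) by (auto simp: graph_aut_def)
  have im: "\<sigma> ` V = V" using bij by (simp add: bij_betw_def)
  show ?case
  proof
    assume "(\<sigma> x, \<sigma> y) \<in> (edge_rel V E)^^Suc m"
    then obtain w where w: "(\<sigma> x, w) \<in> (edge_rel V E)^^m" "(w, \<sigma> y) \<in> edge_rel V E"
      by (auto elim: relpow_Suc_E)
    then have "w \<in> V" by (simp add: edge_rel_iff)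
    then obtain z where z: "z \<in> V" "w = \<sigma> z" using im by auto
    have "(x,z) \<in> (edge_rel V E)^^m" using Suc.IH z w by simp
    moreover have "(z,y) \<in> edge_rel V E" using w z ed Suc.prems by (auto simp: edge_rel_iff)
    ultimately show "(x,y) \<in> (edge_rel V E)^^Suc m" by (rule relpow_Suc_I)
  next
    assume "(x, y) \<in> (edge_rel V E)^^Suc m"
    then obtain z where z: "(x, z) \<in> (edge_rel V E)^^m" "(z, y) \<in> edge_rel V E"
      by (auto elim: relpow_Suc_E)
    then have zV: "z \<in> V" by (simp add: edge_rel_iff)
    have "(\<sigma> x, \<sigma> z) \<in> (edge_rel V E)^^m" using Suc.IH zV z by simp
    moreover have "(\<sigma> z, \<sigma> y) \<in> edge_rel V E" using z zV ed Suc.prems im by (auto simp: edge_rel_iff)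
    ultimately show "(\<sigma> x, \<sigma> y) \<in> (edge_rel V E)^^Suc m" by (rule relpow_Suc_I)
  qed
qed

lemma aut_gdist:
  assumes "graph_aut V E \<sigma>" "x \<in> V" "y \<in> V"
  shows "gdist V E (\<sigma> x) (\<sigma> y) = gdist V E x y"
  unfolding gdist_def using aut_relpow[OF assms] by simp

lemma aut_maps: "graph_aut V E \<sigma> \<Longrightarrow> x \<in> V \<Longrightarrow> \<sigma> x \<in> V"
  by (auto simp: graph_aut_def bij_betw_def)

lemma aut_comp:
  assumes "graph_aut V E \<sigma>" "graph_aut V E \<tau>" shows "graph_aut V E (\<sigma> \<circ> \<tau>)"
proof -
  have b: "bij_betw (\<sigma> \<circ> \<tau>) V V" using assms unfolding graph_aut_def by (auto intro: bij_betw_trans)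
  have "E x y \<longleftrightarrow> E ((\<sigma> \<circ> \<tau>) x) ((\<sigma> \<circ> \<tau>) y)" if "x \<in> V" "y \<in> V" for x y
  proof -
    have "E x y \<longleftrightarrow> E (\<tau> x) (\<tau> y)" using assms(2) that by (simp add: graph_aut_def)
    also have "\<dots> \<longleftrightarrow> E (\<sigma> (\<tau> x)) (\<sigma> (\<tau> y))"
      using assms(1) aut_maps[OF assms(2)] that by (simp add: graph_aut_def)
    finally show ?thesis by simp
  qed
  then show ?thesis using b by (simp add: graph_aut_def)
qed

lemma aut_id: "graph_aut V E id"
  by (simp add: graph_aut_def)

lemma aut_inv:
  assumes "graph_aut V E \<tau>" shows "graph_aut V E (inv_into V \<tau>)"
proof -
  have b: "bij_betw \<tau> V V" using assms by (simp add: graph_aut_def)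
  have b2: "bij_betw (inv_into V \<tau>) V V" using bij_betw_inv_into[OF b] .
  have "E x y \<longleftrightarrow> E (inv_into V \<tau> x) (inv_into V \<tau> y)" if "x \<in> V" "y \<in> V" for x y
  proof -
    have "inv_into V \<tau> x \<in> V" "inv_into V \<tau> y \<in> V" using b2 that by (auto simp: bij_betw_def)
    moreover have "\<tau> (inv_into V \<tau> x) = x" "\<tau> (inv_into V \<tau> y) = y"
      using b that by (auto simp: bij_betw_def f_inv_into_f)
    ultimately show ?thesis using assms by (metis graph_aut_def)
  qed
  then show ?thesis using b2 by (simp add: graph_aut_def)
qed




lemma orbit_sub: "o0 \<in> V \<Longrightarrow> aut_orbit V E o0 \<subseteq> V"
  by (auto simp: aut_orbit_def aut_maps)

lemma orbit_self: "o0 \<in> aut_orbit V E o0"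
proof -
  have "\<exists>\<sigma>. o0 = \<sigma> o0 \<and> graph_aut V E \<sigma>" by (intro exI[of _ id]) (simp add: aut_id)
  then show ?thesis unfolding aut_orbit_def by simp
qed

lemma orbit_closed:
  assumes "graph_aut V E \<sigma>" "x \<in> aut_orbit V E o0" shows "\<sigma> x \<in> aut_orbit V E o0"
proof -
  obtain \<tau> where t: "graph_aut V E \<tau>" "x = \<tau> o0" using assms(2) by (auto simp: aut_orbit_def)
  have "\<sigma> x = (\<sigma> \<circ> \<tau>) o0" using t by simp
  moreover have "graph_aut V E (\<sigma> \<circ> \<tau>)" using aut_comp assms(1) t(1) by blast
  ultimately show ?thesis unfolding aut_orbit_def by blast
qed

lemma orbit_trans:
  assumes "o0 \<in> V" "x \<in> aut_orbit V E o0" "y \<in> aut_orbit V E o0"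
  shows "\<exists>\<sigma>. graph_aut V E \<sigma> \<and> \<sigma> x = y"
proof -
  obtain \<tau> where t: "graph_aut V E \<tau>" "x = \<tau> o0" using assms(2) by (auto simp: aut_orbit_def)
  obtain \<rho> where r: "graph_aut V E \<rho>" "y = \<rho> o0" using assms(3) by (auto simp: aut_orbit_def)
  have b: "bij_betw \<tau> V V" using t(1) by (simp add: graph_aut_def)
  have "inv_into V \<tau> x = o0" using t(2) assms(1) b by (simp add: bij_betw_def)
  then have "(\<rho> \<circ> inv_into V \<tau>) x = y" using r by simp
  moreover have "graph_aut V E (\<rho> \<circ> inv_into V \<tau>)" using aut_comp[OF r(1) aut_inv[OF t(1)]] .
  ultimately show ?thesis by blast
qed



lemma ball_bound:
  assumes "graph V E" "max_degree_le V E k" "v \<in> V"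
  shows "finite {w. \<exists>j\<le>r. (v,w) \<in> (edge_rel V E)^^j} \<and> card {w. \<exists>j\<le>r. (v,w) \<in> (edge_rel V E)^^j} \<le> (k+1)^r"
proof (induction r)
  case 0
  have "{w. \<exists>j\<le>0. (v,w) \<in> (edge_rel V E)^^j} = {v}" by auto
  then show ?case by simp
next
  case (Suc r)
  define B where "B = {w. \<exists>j\<le>r. (v,w) \<in> (edge_rel V E)^^j}"
  define N where "N = (\<lambda>z. insert z {w\<in>V. E z w})"
  have BV: "B \<subseteq> V"
  proof
    fix w assume "w \<in> B"
    then obtain j where "(v,w) \<in> (edge_rel V E)^^j" unfolding B_def by blast
    then show "w \<in> V" using relpow_in_V assms(3) by metis
  qed
  have sub: "{w. \<exists>j\<le>Suc r. (v,w) \<in> (edge_rel V E)^^j} \<subseteq> (\<Union>z\<in>B. N z)"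
  proof
    fix w assume "w \<in> {w. \<exists>j\<le>Suc r. (v,w) \<in> (edge_rel V E)^^j}"
    then obtain j where j: "j \<le> Suc r" "(v,w) \<in> (edge_rel V E)^^j" by blast
    show "w \<in> (\<Union>z\<in>B. N z)"
    proof (cases "j \<le> r")
      case True
      then have "w \<in> B" using j unfolding B_def by blast
      then show ?thesis unfolding N_def by blast
    next
      case False
      then have "j = Suc r" using j by simp
      then have "(v,w) \<in> (edge_rel V E)^^Suc r" using j(2) by simp
      then obtain z where z: "(v,z) \<in> (edge_rel V E)^^r" "(z,w) \<in> edge_rel V E" by (rule relpow_Suc_E)
      have "z \<in> B" unfolding B_def using z(1) by blast
      moreover have "w \<in> N z" using z(2) unfolding N_def by (simp add: edge_rel_iff)
      ultimately show ?thesis by blast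
    qed
  qed
  have fB: "finite B" and cB: "card B \<le> (k+1)^r" using Suc.IH unfolding B_def by auto
  have fN: "finite (N z)" and cN: "card (N z) \<le> k + 1" if "z \<in> B" for z
  proof -
    have zV: "z \<in> V" using that BV by blast
    have f: "finite {w\<in>V. E z w}" and c: "card {w\<in>V. E z w} \<le> k"
      using assms(2) zV unfolding max_degree_le_def by auto
    show "finite (N z)" unfolding N_def using f by simp
    have "card (N z) \<le> Suc (card {w\<in>V. E z w})" unfolding N_def using f card_insert_le_m1
      by (simp add: card_insert_if)
    then show "card (N z) \<le> k + 1" using c by simp
  qed
  have fU: "finite (\<Union>z\<in>B. N z)" using fB fN by (intro finite_UN_I)
  have "card (\<Union>z\<in>B. N z) \<le> (\<Sum>z\<in>B. card (N z))" using card_UN_le[OF fB] .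
  also have "\<dots> \<le> (\<Sum>z\<in>B. k + 1)" using cN by (rule sum_mono)
  also have "\<dots> = card B * (k+1)" by simp
  also have "\<dots> \<le> (k+1)^r * (k+1)" using cB by (rule mult_right_mono) simp
  finally have "card (\<Union>z\<in>B. N z) \<le> (k+1)^Suc r" by (simp add: mult.commute)
  then show ?case using card_mono[OF fU sub] finite_subset[OF sub fU] by linarith
qed




lemma density:
  assumes g: "graph V E" and c: "connected_graph V E" and q: "quasitransitive n V E"
    and o0: "o0 \<in> V" and v: "v \<in> V"
  shows "\<exists>u\<in>aut_orbit V E o0. gdist V E v u + 1 \<le> n"
proof -
  define Orb where "Orb = aut_orbit V E o0"
  have OV: "Orb \<subseteq> V" unfolding Orb_def using orbit_sub[OF o0] .
  have o0O: "o0 \<in> Orb" unfolding Orb_def by (rule orbit_self)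
  define f where "f = (\<lambda>w. LEAST m. \<exists>u\<in>Orb. gdist V E w u = m)"
  have f_ex: "\<exists>u\<in>Orb. gdist V E w u = f w" for w
    unfolding f_def by (rule LeastI_ex) (use o0O in blast)
  have f_le: "f w \<le> gdist V E w u" if "u \<in> Orb" for w u
    unfolding f_def by (rule Least_le) (use that in blast)
  have f_aut: "f (\<sigma> w) \<le> f w" if "graph_aut V E \<sigma>" "w \<in> V" for \<sigma> w
  proof -
    obtain u where u: "u \<in> Orb" "gdist V E w u = f w" using f_ex by blast
    have "\<sigma> u \<in> Orb" using orbit_closed[OF that(1)] u(1) unfolding Orb_def by blast
    then have "f (\<sigma> w) \<le> gdist V E (\<sigma> w) (\<sigma> u)" by (rule f_le)
    also have "\<dots> = gdist V E w u" by (rule aut_gdist[OF that(1) that(2)]) (use u(1) OV in blast)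
    finally show ?thesis using u(2) by simp
  qed
  have f_orb: "f w1 = f w2" if "w1 \<in> V" "w2 \<in> V" "aut_orbit V E w1 = aut_orbit V E w2" for w1 w2
  proof -
    have "w2 \<in> aut_orbit V E w1" using that(3) orbit_self[of w2 V E] by simp
    then obtain \<sigma> where s: "graph_aut V E \<sigma>" "w2 = \<sigma> w1" by (auto simp: aut_orbit_def)
    have "w1 \<in> aut_orbit V E w2" using that(3) orbit_self[of w1 V E] by simp
    then obtain \<tau> where t: "graph_aut V E \<tau>" "w1 = \<tau> w2" by (auto simp: aut_orbit_def)
    have "f w2 \<le> f w1" using f_aut[OF s(1) that(1)] s(2) by simp
    moreover have "f w1 \<le> f w2" using f_aut[OF t(1) that(2)] t(2) by simp
    ultimately show ?thesis by simp
  qed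
  obtain u where u: "u \<in> Orb" "gdist V E v u = f v" using f_ex by blast
  define d where "d = f v"
  have oV: "u \<in> V" using u OV by blast
  have vo: "(v,u) \<in> (edge_rel V E)^^d" using gdist_reach[OF c v oV] u(2) d_def by simp
  have pex: "\<exists>p. (v,p) \<in> (edge_rel V E)^^i \<and> (p,u) \<in> (edge_rel V E)^^(d-i)" if "i \<le> d" for i
  proof -
    have "(v,u) \<in> (edge_rel V E)^^(i + (d-i))" using vo that by simp
    then show ?thesis unfolding relpow_add by (elim relcompE) auto
  qed
  define p where "p = (\<lambda>i. SOME p. (v,p) \<in> (edge_rel V E)^^i \<and> (p,u) \<in> (edge_rel V E)^^(d-i))"
  have p: "(v,p i) \<in> (edge_rel V E)^^i \<and> (p i,u) \<in> (edge_rel V E)^^(d-i)" if "i \<le> d" for i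
    unfolding p_def by (rule someI_ex[OF pex[OF that]])
  have pV: "p i \<in> V" if "i \<le> d" for i using relpow_in_V[OF conjunct1[OF p[OF that]] v] .
  have fp: "f (p i) = d - i" if "i \<le> d" for i
  proof (rule antisym)
    have "f (p i) \<le> gdist V E (p i) u" by (rule f_le[OF u(1)])
    also have "\<dots> \<le> d - i" by (rule gdist_le[OF conjunct2[OF p[OF that]]])
    finally show "f (p i) \<le> d - i" .
    obtain u' where u': "u' \<in> Orb" "gdist V E (p i) u' = f (p i)" using f_ex by blast
    have o'V: "u' \<in> V" using u' OV by blast
    have "d \<le> gdist V E v u'" unfolding d_def by (rule f_le[OF u'(1)])
    also have "\<dots> \<le> gdist V E v (p i) + gdist V E (p i) u'" using gdist_tri[OF c v pV[OF that] o'V] .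
    also have "\<dots> \<le> i + f (p i)" using gdist_le[OF conjunct1[OF p[OF that]]] u'(2) by simp
    finally show "d - i \<le> f (p i)" by simp
  qed
  have inj: "inj_on (\<lambda>i. aut_orbit V E (p i)) {..d}"
  proof (rule inj_onI)
    fix i j assume ij: "i \<in> {..d}" "j \<in> {..d}" "aut_orbit V E (p i) = aut_orbit V E (p j)"
    have "f (p i) = f (p j)" using f_orb[OF pV pV ij(3)] ij by simp
    then show "i = j" using fp ij by simp
  qed
  have sub: "(\<lambda>i. aut_orbit V E (p i)) ` {..d} \<subseteq> aut_orbit V E ` V" using pV by auto
  have fin: "finite (aut_orbit V E ` V)" and cn: "card (aut_orbit V E ` V) \<le> n"
    using q by (auto simp: quasitransitive_def)
  have "d + 1 = card ((\<lambda>i. aut_orbit V E (p i)) ` {..d})" using card_image[OF inj] by simp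
  also have "\<dots> \<le> card (aut_orbit V E ` V)" by (rule card_mono[OF fin sub])
  finally have "d + 1 \<le> n" using cn by simp
  then have "gdist V E v u + 1 \<le> n" using u(2) d_def by simp
  then show ?thesis using u(1) unfolding Orb_def by blast
qed




theorem proposition2p11:
  fixes V :: "'a set" and E :: "'a \<Rightarrow> 'a \<Rightarrow> bool" and n k :: nat
  assumes "graph V E" and "connected_graph V E" and "quasitransitive n V E"
    and "max_degree_le V E k"
  shows "\<exists>(V' :: 'a set) E' \<phi>.
           graph V' E' \<and> connected_graph V' E' \<and> vertex_transitive V' E' \<and>
           max_degree_le V' E' ((k + 1) ^ (2 * n)) \<and>
           gdiam V' E' \<le> gdiam V E \<and>
           inj_on \<phi> V' \<and>
           rough_isometry V' E' V E \<phi> (real (2 * n)) (real n) \<and>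
           (finite V \<longrightarrow> real (card V) / real n \<le> real (card V') \<and> card V' \<le> card V)"
proof -
  note g = assms(1) and c = assms(2) and q = assms(3) and md = assms(4)
  have Vne: "V \<noteq> {}" using c by (simp add: connected_graph_def)
  define S where "S = aut_orbit V E ` V"
  have finS: "finite S" and cS: "card S \<le> n" using q unfolding S_def quasitransitive_def by auto
  have Sne: "S \<noteq> {}" using Vne unfolding S_def by simp
  have n1: "1 \<le> n" using cS finS Sne card_gt_0_iff[of S] by linarith
  define M where "M = Max (card ` S)"
  have finCS: "finite (card ` S)" using finS by simp
  have "M \<in> card ` S" unfolding M_def using finCS Sne by (intro Max_in) auto
  then obtain o0 where o0: "o0 \<in> V" and o0M: "card (aut_orbit V E o0) = M" unfolding S_def by auto
  have maxc: "card (aut_orbit V E w) \<le> card (aut_orbit V E o0)" if "w \<in> V" for w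
  proof -
    have "card (aut_orbit V E w) \<in> card ` S" using that unfolding S_def by simp
    then show ?thesis unfolding o0M M_def using finCS by (simp add: Max_ge)
  qed
  define Orb where "Orb = aut_orbit V E o0"
  have OV: "Orb \<subseteq> V" unfolding Orb_def using orbit_sub[OF o0] .
  have o0O: "o0 \<in> Orb" unfolding Orb_def by (rule orbit_self)
  have dens: "\<exists>u\<in>Orb. gdist V E v u + 1 \<le> n" if "v \<in> V" for v
    using density[OF g c q o0 that] unfolding Orb_def .
  define E' where "E' = (\<lambda>x y. x \<in> Orb \<and> y \<in> Orb \<and> x \<noteq> y \<and> gdist V E x y \<le> 2*n - 1)"
  define R' where "R' = edge_rel Orb E'"
  have R'_iff: "(x,y) \<in> R' \<longleftrightarrow> E' x y" for x y unfolding R'_def E'_def edge_rel_def by auto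
  have gE: "graph Orb E'"
    unfolding graph_def
  proof (intro allI impI)
    fix x y assume "E' x y"
    then have "x \<in> Orb" "y \<in> Orb" "x \<noteq> y" "gdist V E x y \<le> 2*n - 1" unfolding E'_def by auto
    moreover have "gdist V E y x = gdist V E x y" using gdist_sym[OF g c] calculation OV by blast
    ultimately show "x \<in> Orb \<and> y \<in> Orb \<and> E' y x \<and> x \<noteq> y" unfolding E'_def by auto
  qed
  have C1: "gdist V E x y \<le> (2*n-1) * m" if "x \<in> Orb" "(x,y) \<in> R'^^m" for x y m
    using that(2)
  proof (induction m arbitrary: y)
    case 0 then show ?case by (simp add: gdist_self)
  next
    case (Suc m)
    from Suc.prems obtain z where z: "(x,z) \<in> R'^^m" "(z,y) \<in> R'" by (rule relpow_Suc_E)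
    have zy: "z \<in> Orb" "y \<in> Orb" "gdist V E z y \<le> 2*n-1" using z(2) unfolding R'_iff E'_def by auto
    have "gdist V E x y \<le> gdist V E x z + gdist V E z y"
      by (rule gdist_tri[OF c]) (use that(1) zy OV in auto)
    also have "\<dots> \<le> (2*n-1)*m + (2*n-1)" using Suc.IH[OF z(1)] zy(3) by simp
    finally show ?case by simp
  qed
  have C2: "\<exists>u\<in>Orb. gdist V E y u + 1 \<le> n \<and> (y \<in> Orb \<longrightarrow> u = y) \<and> (\<exists>m'\<le>m. (x,u) \<in> R'^^m')"
    if xO: "x \<in> Orb" and xy: "(x,y) \<in> (edge_rel V E)^^m" for x y m
    using xy
  proof (induction m arbitrary: y)
    case 0
    then have "y = x" by simp
    then show ?case using xO n1 by (intro bexI[of _ x]) (auto simp: gdist_self)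
  next
    case (Suc m)
    from Suc.prems obtain y' where y': "(x,y') \<in> (edge_rel V E)^^m" "(y',y) \<in> edge_rel V E"
      by (rule relpow_Suc_E)
    obtain u where u: "u \<in> Orb" "gdist V E y' u + 1 \<le> n" and mm: "\<exists>m'\<le>m. (x,u) \<in> R'^^m'"
      using Suc.IH[OF y'(1)] by blast
    obtain m' where m': "m' \<le> m" "(x,u) \<in> R'^^m'" using mm by blast
    have y'V: "y' \<in> V" and yV: "y \<in> V" and Eyy: "E y' y" using y'(2) by (auto simp: edge_rel_iff)
    obtain uz where uz: "uz \<in> Orb" "gdist V E y uz + 1 \<le> n" "y \<in> Orb \<longrightarrow> uz = y"
    proof (cases "y \<in> Orb")
      case True
      then show ?thesis using that[of y] n1 by (simp add: gdist_self)
    next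
      case False
      then show ?thesis using that dens[OF yV] by blast
    qed
    have uV: "u \<in> V" and uzV: "uz \<in> V" using u(1) uz(1) OV by auto
    have "gdist V E u uz \<le> gdist V E u y' + gdist V E y' uz" by (rule gdist_tri[OF c uV y'V uzV])
    also have "gdist V E y' uz \<le> gdist V E y' y + gdist V E y uz" by (rule gdist_tri[OF c y'V yV uzV])
    finally have "gdist V E u uz \<le> gdist V E u y' + (gdist V E y' y + gdist V E y uz)" by simp
    moreover have "gdist V E u y' = gdist V E y' u" using gdist_sym[OF g c uV y'V] .
    moreover have "gdist V E y' y \<le> 1" by (rule gdist_edge[where V=V and E=E, OF y'V yV Eyy])
    ultimately have dd: "gdist V E u uz \<le> 2*n - 1" using u(2) uz(2) by linarith
    show ?case
    proof (cases "u = uz")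
      case True
      have "\<exists>m''\<le>Suc m. (x,uz) \<in> R'^^m''" using m' True by (intro exI[of _ m']) auto
      then show ?thesis using uz by (intro bexI[of _ uz]) auto
    next
      case False
      then have "(u,uz) \<in> R'" unfolding R'_iff E'_def using u(1) uz(1) dd by simp
      then have "(x,uz) \<in> R'^^Suc m'" using m'(2) by (intro relpow_Suc_I)
      then have "\<exists>m''\<le>Suc m. (x,uz) \<in> R'^^m''" using m'(1) by (intro exI[of _ "Suc m'"]) auto
      then show ?thesis using uz by (intro bexI[of _ uz]) auto
    qed
  qed
  have C2': "\<exists>m'\<le>gdist V E x y. (x,y) \<in> R'^^m'" if "x \<in> Orb" "y \<in> Orb" for x y
  proof -
    have "(x,y) \<in> (edge_rel V E)^^(gdist V E x y)" using gdist_reach[OF c] that OV by blast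
    from C2[OF that(1) this] obtain u where "u \<in> Orb" "y \<in> Orb \<longrightarrow> u = y"
      "\<exists>m'\<le>gdist V E x y. (x,u) \<in> R'^^m'" by blast
    then show ?thesis using that(2) by auto
  qed
  have conn': "connected_graph Orb E'"
    unfolding connected_graph_def
  proof (intro conjI ballI)
    show "Orb \<noteq> {}" using o0O by blast
    fix x y assume "x \<in> Orb" "y \<in> Orb"
    then obtain m' where "(x,y) \<in> R'^^m'" using C2' by blast
    then show "(x,y) \<in> (edge_rel Orb E')\<^sup>*" unfolding R'_def rtrancl_power by blast
  qed
  have dle: "gdist Orb E' x y \<le> gdist V E x y" if xy: "x \<in> Orb" "y \<in> Orb" for x y
  proof -
    obtain m' where "m' \<le> gdist V E x y" "(x,y) \<in> R'^^m'" using C2'[OF xy] by blast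
    then show ?thesis unfolding R'_def using gdist_le[where V=Orb and E=E' and m=m'] by fastforce
  qed
  have dge: "gdist V E x y \<le> (2*n-1) * gdist Orb E' x y" if "x \<in> Orb" "y \<in> Orb" for x y
    using C1[OF that(1)] gdist_reach[OF conn' that] unfolding R'_def by blast
  have vt: "vertex_transitive Orb E'"
    unfolding vertex_transitive_def
  proof (intro ballI)
    fix x y assume x: "x \<in> Orb" and y: "y \<in> Orb"
    obtain \<sigma> where s: "graph_aut V E \<sigma>" "\<sigma> x = y" using orbit_trans[OF o0] x y unfolding Orb_def by blast
    have bV: "bij_betw \<sigma> V V" using s(1) by (simp add: graph_aut_def)
    have injV: "inj_on \<sigma> V" using bV by (simp add: bij_betw_def)
    have cl: "\<sigma> z \<in> Orb" if "z \<in> Orb" for z using orbit_closed[OF s(1)] that unfolding Orb_def by blast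
    have img: "\<sigma> ` Orb = Orb"
    proof
      show "\<sigma> ` Orb \<subseteq> Orb" using cl by blast
      show "Orb \<subseteq> \<sigma> ` Orb"
      proof
        fix z assume z: "z \<in> Orb"
        have z': "inv_into V \<sigma> z \<in> Orb" using orbit_closed[OF aut_inv[OF s(1)]] z unfolding Orb_def by blast
        have "z \<in> \<sigma> ` V" using bV z OV by (auto simp: bij_betw_def)
        then have "\<sigma> (inv_into V \<sigma> z) = z" by (rule f_inv_into_f)
        then show "z \<in> \<sigma> ` Orb" using z' by (rule image_eqI[OF sym])
      qed
    qed
    have "bij_betw \<sigma> Orb Orb" unfolding bij_betw_def using img inj_on_subset[OF injV OV] by simp
    moreover have "E' a b \<longleftrightarrow> E' (\<sigma> a) (\<sigma> b)" if a: "a \<in> Orb" and b: "b \<in> Orb" for a b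
    proof -
      have aV: "a \<in> V" and bV': "b \<in> V" using a b OV by auto
      have "a \<noteq> b \<longleftrightarrow> \<sigma> a \<noteq> \<sigma> b" using inj_on_eq_iff[OF injV aV bV'] by simp
      moreover have "gdist V E (\<sigma> a) (\<sigma> b) = gdist V E a b" by (rule aut_gdist[OF s(1) aV bV'])
      ultimately show ?thesis unfolding E'_def using a b cl[OF a] cl[OF b] by auto
    qed
    ultimately have "graph_aut Orb E' \<sigma>" unfolding graph_aut_def by blast
    then show "\<exists>\<sigma>. graph_aut Orb E' \<sigma> \<and> \<sigma> x = y" using s(2) by blast
  qed
  have deg: "max_degree_le Orb E' ((k + 1) ^ (2 * n))"
    unfolding max_degree_le_def
  proof
    fix v assume v: "v \<in> Orb"
    have vV: "v \<in> V" using v OV by blast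
    define B where "B = {w. \<exists>j\<le>2*n-1. (v,w) \<in> (edge_rel V E)^^j}"
    have sub: "{w\<in>Orb. E' v w} \<subseteq> B"
    proof
      fix w assume "w \<in> {w\<in>Orb. E' v w}"
      then have w: "w \<in> Orb" "gdist V E v w \<le> 2*n-1" unfolding E'_def by auto
      have "(v,w) \<in> (edge_rel V E)^^(gdist V E v w)" using gdist_reach[OF c vV] w(1) OV by blast
      then show "w \<in> B" unfolding B_def using w(2) by blast
    qed
    have fB: "finite B" and cB: "card B \<le> (k+1)^(2*n-1)" using ball_bound[OF g md vV] unfolding B_def by auto
    have "card {w\<in>Orb. E' v w} \<le> card B" by (rule card_mono[OF fB sub])
    also have "\<dots> \<le> (k+1)^(2*n-1)" by (rule cB)
    also have "\<dots> \<le> (k+1)^(2*n)" by (rule power_increasing) auto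
    finally show "finite {w\<in>Orb. E' v w} \<and> card {w\<in>Orb. E' v w} \<le> (k+1)^(2*n)"
      using finite_subset[OF sub fB] by simp
  qed
  have diam: "gdiam Orb E' \<le> gdiam V E"
    unfolding gdiam_def
  proof (intro SUP_least)
    fix x y assume x: "x \<in> Orb" and y: "y \<in> Orb"
    have xV: "x \<in> V" and yV: "y \<in> V" using x y OV by auto
    have "enat (gdist Orb E' x y) \<le> enat (gdist V E x y)" using dle[OF x y] by simp
    also have "\<dots> \<le> (SUP y\<in>V. enat (gdist V E x y))" by (rule SUP_upper[OF yV])
    also have "\<dots> \<le> (SUP x\<in>V. SUP y\<in>V. enat (gdist V E x y))" by (rule SUP_upper[OF xV])
    finally show "enat (gdist Orb E' x y) \<le> (SUP x\<in>V. SUP y\<in>V. enat (gdist V E x y))" .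
  qed
  have rough: "rough_isometry Orb E' V E id (real (2 * n)) (real n)"
    unfolding rough_isometry_def
  proof (intro conjI ballI)
    show "id ` Orb \<subseteq> V" using OV by simp
  next
    fix x y assume x: "x \<in> Orb" and y: "y \<in> Orb"
    define a where "a = gdist Orb E' x y"
    define b where "b = gdist V E x y"
    have ab: "a \<le> b" unfolding a_def b_def using dle[OF x y] .
    have ba: "b \<le> (2*n-1) * a" unfolding a_def b_def using dge[OF x y] .
    have i1: "inverse (real (2*n)) \<le> 1" using n1 by (simp only: inverse_le_1_iff) simp
    have "inverse (real (2*n)) * real a \<le> real a" by (rule mult_left_le_one_le) (use i1 in auto)
    also have "\<dots> \<le> real b" using ab by simp
    finally show "inverse (real (2 * n)) * real (gdist Orb E' x y) - real n \<le> real (gdist V E (id x) (id y))"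
      unfolding a_def b_def by simp
    have "(2*n-1) * a \<le> 2*n*a" by (rule mult_le_mono1) simp
    then have "b \<le> 2*n*a" using ba by linarith
    then have "real b \<le> real (2*n*a)" by (simp only: of_nat_le_iff)
    then have "real b \<le> real (2*n) * real a" by simp
    then show "real (gdist V E (id x) (id y)) \<le> real (2 * n) * real (gdist Orb E' x y) + real n"
      unfolding a_def b_def by simp
  next
    fix y assume yV: "y \<in> V"
    obtain u where u: "u \<in> Orb" "gdist V E y u + 1 \<le> n" using dens[OF yV] by blast
    have "gdist V E u y = gdist V E y u" using gdist_sym[OF g c] u(1) OV yV by blast
    then have "real (gdist V E (id u) y) \<le> real n" using u(2) by simp
    then show "\<exists>x\<in>Orb. real (gdist V E (id x) y) \<le> real n" using u(1) by blast
  qed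
  have fin: "real (card V) / real n \<le> real (card Orb) \<and> card Orb \<le> card V" if fV: "finite V"
  proof -
    have c1: "card Orb \<le> card V" by (rule card_mono[OF fV OV])
    have VU: "V \<subseteq> \<Union>S"
    proof
      fix v assume v: "v \<in> V"
      have "aut_orbit V E v \<in> S" unfolding S_def using v by (rule imageI)
      moreover have "v \<in> aut_orbit V E v" by (rule orbit_self)
      ultimately show "v \<in> \<Union>S" by (rule UnionI)
    qed
    have UV: "\<Union>S \<subseteq> V"
    proof
      fix z assume "z \<in> \<Union>S"
      then obtain w where w: "w \<in> V" "z \<in> aut_orbit V E w" unfolding S_def by blast
      show "z \<in> V" using orbit_sub[OF w(1)] w(2) by (rule subsetD)
    qed
    have fU: "finite (\<Union>S)" by (rule finite_subset[OF UV fV])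
    have "card V \<le> card (\<Union>S)" by (rule card_mono[OF fU VU])
    also have "\<dots> \<le> sum card S" by (rule card_Union_le_sum_card)
    also have "\<dots> \<le> sum (\<lambda>_. card Orb) S"
    proof (rule sum_mono)
      fix X assume "X \<in> S"
      then obtain w where "w \<in> V" "X = aut_orbit V E w" unfolding S_def by blast
      then show "card X \<le> card Orb" unfolding Orb_def using maxc by simp
    qed
    also have "\<dots> = card S * card Orb" by simp
    also have "\<dots> \<le> n * card Orb" using cS by (rule mult_le_mono1)
    finally have "real (card V) \<le> real (n * card Orb)" by (simp only: of_nat_le_iff)
    then have "real (card V) \<le> real n * real (card Orb)" by simp
    then have "real (card V) / real n \<le> real (card Orb)" using n1 by (simp add: divide_le_eq mult.commute)
    then show ?thesis using c1 by simp
  qed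
  show ?thesis
    by (rule exI[of _ Orb], rule exI[of _ E'], rule exI[of _ id])
       (use gE conn' vt deg diam rough fin in simp)
qed


end
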